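(* Consider the Probabilistic Serial mechanism with $n$ agents and $m \le n$ items in the following dichotomous setting for agent 1. Agent 1 has a true strict linear order $\succ_1$ over the items; let $\overline{O}$ be the set of its $k$ most preferred items under $\succ_1$ (for some $1 \le k \le m$), and let agent 1's utility from an allocation be the total amount it receives of items in $\overline{O}$. Fix arbitrary reported strict linear orders of agents $2,\dots,n$. Let $u_1$ be agent 1's utility when it reports $\succ_1$, and let $T$ be the time at which the last item of $\overline{O}$ is exhausted in this truthful run. If $\tfrac23 \le T \le 1$, then for every strict linear order $\succ'_1$ reported by agent 1, its resulting utility $u'_1$ satisfies $u'_1 \le \tfrac32 u_1$.
   Context: Probabilistic Serial: there are $n$ agents and $m$ divisible items of unit supply; each agent reports a strict linear order over all items. Starting at time $0$, every agent consumes at rate $1$ per unit time its most preferred item (according to its report) among those with positive remaining supply; when an item is exhausted, agents consuming it move to their most preferred item still available; this continues until all items are exhausted. Each agent's allocation is the amount of each item it consumed. (In the truthful run agent 1 eats only items of $\overline{O}$ until time $T$, so $u_1 = T$.) *)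

theory Defs
  imports Complex_Main
begin

text \<open>Agents are 0..<n (agent 0 is the paper's agent 1); items are 0..<m.
  A strict linear order over the items is a list enumerating them, most preferred first.\<close>

definition is_order :: "nat \<Rightarrow> nat list \<Rightarrow> bool" where
  "is_order m xs \<longleftrightarrow> distinct xs \<and> set xs = {0..<m}"

text \<open>State of the eating process: (time, remaining supply, allocation so far).\<close>
type_synonym ps_state = "real \<times> (nat \<Rightarrow> real) \<times> (nat \<Rightarrow> nat \<Rightarrow> real)"

definition avail :: "nat \<Rightarrow> (nat \<Rightarrow> real) \<Rightarrow> nat set" where
  "avail m s = {j. j < m \<and> 0 < s j}"

definition top_item :: "nat list \<Rightarrow> nat set \<Rightarrow> nat" where
  "top_item xs A = hd (filter (\<lambda>j. j \<in> A) xs)"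

definition eaters :: "nat \<Rightarrow> (nat \<Rightarrow> nat list) \<Rightarrow> nat set \<Rightarrow> nat \<Rightarrow> nat" where
  "eaters n P A j = card {i. i < n \<and> top_item (P i) A = j}"

text \<open>One phase: every agent eats its top available item at rate 1 until the
  first moment some item is exhausted.\<close>
definition ps_step :: "nat \<Rightarrow> nat \<Rightarrow> (nat \<Rightarrow> nat list) \<Rightarrow> ps_state \<Rightarrow> ps_state" where
  "ps_step n m P st = (case st of (t, s, p) \<Rightarrow>
     (let A = avail m s in
      if A = {} then (t, s, p) else
      (let c = eaters n P A;
           \<delta> = Min ((\<lambda>j. s j / real (c j)) ` {j \<in> A. 0 < c j})
       in (t + \<delta>,
           \<lambda>j. if j \<in> A then s j - real (c j) * \<delta> else s j,
           \<lambda>i j. if i < n \<and> j = top_item (P i) A then p i j + \<delta> else p i j))))"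

definition ps_init :: "nat \<Rightarrow> ps_state" where
  "ps_init m = (0, \<lambda>j. if j < m then 1 else 0, \<lambda>i j. 0)"

definition ps_run :: "nat \<Rightarrow> nat \<Rightarrow> (nat \<Rightarrow> nat list) \<Rightarrow> nat \<Rightarrow> ps_state" where
  "ps_run n m P k = (ps_step n m P ^^ k) (ps_init m)"

text \<open>Final allocation: after m phases every item is exhausted (each phase exhausts one).\<close>
definition ps_alloc :: "nat \<Rightarrow> nat \<Rightarrow> (nat \<Rightarrow> nat list) \<Rightarrow> nat \<Rightarrow> nat \<Rightarrow> real" where
  "ps_alloc n m P = snd (snd (ps_run n m P m))"

definition exhaust_time :: "nat \<Rightarrow> nat \<Rightarrow> (nat \<Rightarrow> nat list) \<Rightarrow> nat \<Rightarrow> real" where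
  "exhaust_time n m P j = fst (ps_run n m P (LEAST k. fst (snd (ps_run n m P k)) j \<le> 0))"

definition utility :: "nat set \<Rightarrow> (nat \<Rightarrow> real) \<Rightarrow> real" where
  "utility Ob a = (\<Sum>j\<in>Ob. a j)"

end

theory Submission
  imports Defs
begin

definition dlt :: "nat \<Rightarrow> nat \<Rightarrow> (nat \<Rightarrow> nat list) \<Rightarrow> (nat \<Rightarrow> real) \<Rightarrow> real" where
  "dlt n m Q s = Min ((\<lambda>j. s j / real (eaters n Q (avail m s) j)) ` {j \<in> avail m s. 0 < eaters n Q (avail m s) j})"

lemma step_simp: "avail m s \<noteq> {} \<Longrightarrow> ps_step n m Q (t,s,p) =
  (t + dlt n m Q s,
   \<lambda>j. if j \<in> avail m s then s j - real (eaters n Q (avail m s) j) * dlt n m Q s else s j,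
   \<lambda>i j. if i < n \<and> j = top_item (Q i) (avail m s) then p i j + dlt n m Q s else p i j)"
  unfolding ps_step_def dlt_def Let_def by simp

lemma step_empty: "avail m s = {} \<Longrightarrow> ps_step n m Q (t,s,p) = (t,s,p)"
  by (simp add: ps_step_def)

lemma avail_sub: "avail m s \<subseteq> {0..<m}" by (auto simp: avail_def)

lemma top_in: assumes "is_order m xs" "A \<subseteq> {0..<m}" "A \<noteq> {}"
  shows "top_item xs A \<in> A"
proof -
  obtain x where x: "x \<in> A" using assms(3) by blast
  then have "x \<in> set xs" using assms(1,2) unfolding is_order_def by auto
  then have "filter (\<lambda>j. j \<in> A) xs \<noteq> []" using x by (auto simp: filter_empty_conv)
  then have "hd (filter (\<lambda>j. j \<in> A) xs) \<in> set (filter (\<lambda>j. j \<in> A) xs)" by (rule hd_in_set)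
  then show ?thesis unfolding top_item_def by (metis mem_Collect_eq set_filter)
qed

lemma top_take: assumes "A \<inter> set (take k xs) \<noteq> {}"
  shows "top_item xs A \<in> set (take k xs)"
proof -
  have e: "xs = take k xs @ drop k xs" by simp
  from assms have ne: "filter (\<lambda>j. j \<in> A) (take k xs) \<noteq> []" by (auto simp: filter_empty_conv)
  have "top_item xs A = hd (filter (\<lambda>j. j \<in> A) (take k xs) @ filter (\<lambda>j. j \<in> A) (drop k xs))"
    unfolding top_item_def by (subst e, subst filter_append) simp
  also have "\<dots> = hd (filter (\<lambda>j. j \<in> A) (take k xs))" using ne by simp
  also have "\<dots> \<in> set (filter (\<lambda>j. j \<in> A) (take k xs))" using ne by (rule hd_in_set)
  finally show ?thesis by (metis filter_is_subset subsetD)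
qed

lemma eaters_sum: assumes "\<forall>i<n. is_order m (Q i)" "A \<subseteq> {0..<m}" "A \<noteq> {}"
  shows "(\<Sum>j\<in>A. real (eaters n Q A j)) = real n"
proof -
  have fin: "finite A" using assms(2) finite_subset by blast
  have "(\<Sum>j\<in>A. real (eaters n Q A j)) = (\<Sum>j\<in>A. \<Sum>i<n. if top_item (Q i) A = j then 1 else 0)"
  proof (rule sum.cong)
    fix j assume "j \<in> A"
    have "real (card {i. i < n \<and> top_item (Q i) A = j}) = real (card {i\<in>{..<n}. top_item (Q i) A = j})"
      by (rule arg_cong[where f="\<lambda>S. real (card S)"]) blast
    also have "\<dots> = (\<Sum>i<n. if top_item (Q i) A = j then 1 else 0)"
      by (simp add: sum.If_cases Int_def)
    finally show "real (eaters n Q A j) = (\<Sum>i<n. if top_item (Q i) A = j then 1 else 0)"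
      by (simp add: eaters_def)
  qed simp
  also have "\<dots> = (\<Sum>i<n. \<Sum>j\<in>A. if top_item (Q i) A = j then 1 else 0)"
    by (rule sum.swap)
  also have "\<dots> = (\<Sum>i<n. 1)"
  proof (rule sum.cong)
    fix i assume "i \<in> {..<n}"
    then have "top_item (Q i) A \<in> A" using top_in assms by auto
    then show "(\<Sum>j\<in>A. if top_item (Q i) A = j then 1 else 0) = (1::real)"
      using fin by (simp add: sum.delta)
  qed simp
  finally show ?thesis by simp
qed

lemma dlt_props:
  assumes ord: "\<forall>i<n. is_order m (Q i)" and n: "0 < n" and ne: "avail m s \<noteq> {}"
  shows "0 < dlt n m Q s"
    and "\<And>j. j \<in> avail m s \<Longrightarrow> 0 < eaters n Q (avail m s) j \<Longrightarrow> dlt n m Q s \<le> s j / real (eaters n Q (avail m s) j)"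
    and "\<exists>j0\<in>avail m s. 0 < eaters n Q (avail m s) j0 \<and> dlt n m Q s = s j0 / real (eaters n Q (avail m s) j0)"
proof -
  let ?A = "avail m s" and ?c = "eaters n Q (avail m s)"
  let ?D = "{j \<in> ?A. 0 < ?c j}"
  have finA: "finite ?A" using avail_sub finite_subset by blast
  then have finD: "finite ?D" by simp
  have t0: "top_item (Q 0) ?A \<in> ?A" by (rule top_in[OF ord[rule_format, OF n] avail_sub ne])
  have "0 < ?c (top_item (Q 0) ?A)"
  proof -
    have "0 \<in> {i. i < n \<and> top_item (Q i) ?A = top_item (Q 0) ?A}" using n by simp
    moreover have "finite {i. i < n \<and> top_item (Q i) ?A = top_item (Q 0) ?A}" by simp
    ultimately show ?thesis unfolding eaters_def by (metis card_gt_0_iff empty_iff)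
  qed
  then have Dne: "?D \<noteq> {}" using t0 by blast
  have "dlt n m Q s \<in> (\<lambda>j. s j / real (?c j)) ` ?D"
    unfolding dlt_def using finD Dne by (intro Min_in) auto
  then show "\<exists>j0\<in>avail m s. 0 < eaters n Q (avail m s) j0 \<and> dlt n m Q s = s j0 / real (eaters n Q (avail m s) j0)"
    by auto
  show le: "\<And>j. j \<in> avail m s \<Longrightarrow> 0 < ?c j \<Longrightarrow> dlt n m Q s \<le> s j / real (?c j)"
    unfolding dlt_def using finD by (intro Min_le) auto
  have "\<forall>x\<in>(\<lambda>j. s j / real (?c j)) ` ?D. 0 < x"
    by (auto simp: avail_def)
  then show "0 < dlt n m Q s" unfolding dlt_def using finD Dne by simp
qed

definition Inv :: "nat \<Rightarrow> nat \<Rightarrow> ps_state \<Rightarrow> bool" where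
  "Inv n m st = (case st of (t,s,p) \<Rightarrow> (\<forall>j. 0 \<le> s j) \<and> (\<forall>i j. 0 \<le> p i j) \<and>
      (\<Sum>j<m. p 0 j) = t \<and> real n * t = (\<Sum>j<m. 1 - s j))"

lemma step_facts:
  assumes ord: "\<forall>i<n. is_order m (Q i)" and n: "0 < n" and ne: "avail m s \<noteq> {}"
    and s0: "\<forall>j. 0 \<le> s j"
    and st: "ps_step n m Q (t,s,p) = (t',s',p')"
  shows "t' = t + dlt n m Q s" "\<forall>j. 0 \<le> s' j" "avail m s' \<subset> avail m s"
    "(\<Sum>j<m. s' j) = (\<Sum>j<m. s j) - real n * dlt n m Q s"
    "\<And>i j. p i j \<le> p' i j"
    "\<And>B. finite B \<Longrightarrow> top_item (Q 0) (avail m s) \<in> B \<Longrightarrow> (\<Sum>j\<in>B. p' 0 j) = (\<Sum>j\<in>B. p 0 j) + dlt n m Q s"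
proof -
  let ?A = "avail m s" and ?c = "eaters n Q (avail m s)" and ?d = "dlt n m Q s"
  note eq = st[unfolded step_simp[OF ne]]
  have s'd: "s' = (\<lambda>j. if j \<in> ?A then s j - real (?c j) * ?d else s j)" using eq by simp
  have p'd: "p' = (\<lambda>i j. if i < n \<and> j = top_item (Q i) ?A then p i j + ?d else p i j)" using eq by simp
  show "t' = t + ?d" using eq by simp
  have dpos: "0 < ?d" by (rule dlt_props(1)[OF ord n ne])
  show sn: "\<forall>j. 0 \<le> s' j"
  proof
    fix j
    show "0 \<le> s' j"
    proof (cases "j \<in> ?A \<and> 0 < ?c j")
      case True
      then have "?d \<le> s j / real (?c j)" using dlt_props(2)[OF ord n ne] by blast
      then have "real (?c j) * ?d \<le> s j" using True by (simp add: field_simps)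
      then show ?thesis using True s'd by simp
    next
      case False
      then show ?thesis using s'd s0 by auto
    qed
  qed
  obtain j0 where j0: "j0 \<in> ?A" "0 < ?c j0" "?d = s j0 / real (?c j0)" using dlt_props(3)[OF ord n ne] by blast
  have "s' j0 = 0" using j0 s'd by simp
  then have "j0 \<notin> avail m s'" by (simp add: avail_def)
  moreover have "avail m s' \<subseteq> ?A" using s'd by (auto simp: avail_def split: if_splits)
  ultimately show "avail m s' \<subset> ?A" using j0(1) by blast
  have finA: "finite ?A" using avail_sub finite_subset by blast
  have "(\<Sum>j<m. s' j) = (\<Sum>j<m. s j - (if j \<in> ?A then real (?c j) * ?d else 0))"
    using s'd by (intro sum.cong) auto
  also have "\<dots> = (\<Sum>j<m. s j) - (\<Sum>j<m. (if j \<in> ?A then real (?c j) * ?d else 0))"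
    by (simp add: sum_subtractf)
  also have "(\<Sum>j<m. (if j \<in> ?A then real (?c j) * ?d else 0)) = (\<Sum>j\<in>?A. real (?c j) * ?d)"
    using avail_sub[of m s] by (simp add: sum.If_cases Int_absorb1 lessThan_atLeast0)
  also have "\<dots> = real n * ?d"
    using eaters_sum[OF ord avail_sub ne] by (simp add: sum_distrib_right[symmetric])
  finally show "(\<Sum>j<m. s' j) = (\<Sum>j<m. s j) - real n * ?d" .
  show "\<And>i j. p i j \<le> p' i j" using p'd dpos by auto
  fix B :: "nat set" assume fB: "finite B" and tB: "top_item (Q 0) ?A \<in> B"
  have "(\<Sum>j\<in>B. p' 0 j) = (\<Sum>j\<in>B. p 0 j + (if j = top_item (Q 0) ?A then ?d else 0))"
    using p'd n by (intro sum.cong) auto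
  also have "\<dots> = (\<Sum>j\<in>B. p 0 j) + ?d" using fB tB by (simp add: sum.distrib)
  finally show "(\<Sum>j\<in>B. p' 0 j) = (\<Sum>j\<in>B. p 0 j) + ?d" .
qed

lemma run_Suc: "ps_run n m Q (Suc r) = ps_step n m Q (ps_run n m Q r)"
  by (simp add: ps_run_def)

lemma run_inv:
  assumes ord: "\<forall>i<n. is_order m (Q i)" and n: "0 < n"
  shows "Inv n m (ps_run n m Q r) \<and> card (avail m (fst (snd (ps_run n m Q r)))) \<le> m - r"
proof (induction r)
  case 0
  have "card (avail m (\<lambda>j. if j < m then 1 else 0)) \<le> m"
    using card_mono[OF _ avail_sub] by fastforce
  then show ?case by (simp add: ps_run_def ps_init_def Inv_def)
next
  case (Suc r)
  obtain t s p where tsp: "ps_run n m Q r = (t,s,p)" by (cases "ps_run n m Q r") auto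
  show ?case
  proof (cases "avail m s = {}")
    case True
    then show ?thesis using Suc tsp by (simp add: run_Suc step_empty)
  next
    case False
    obtain t' s' p' where st: "ps_step n m Q (t,s,p) = (t',s',p')" by (cases "ps_step n m Q (t,s,p)") auto
    have I: "\<forall>j. 0 \<le> s j" "\<forall>i j. 0 \<le> p i j" "(\<Sum>j<m. p 0 j) = t" "real n * t = (\<Sum>j<m. 1 - s j)"
      and c: "card (avail m s) \<le> m - r"
      using Suc tsp by (auto simp: Inv_def)
    note F = step_facts[OF ord n False I(1) st]
    have "top_item (Q 0) (avail m s) \<in> avail m s"
      by (rule top_in[OF ord[rule_format, OF n] avail_sub False])
    then have "top_item (Q 0) (avail m s) \<in> {..<m}" using avail_sub by fastforce
    then have p': "(\<Sum>j<m. p' 0 j) = t'" using F(1) F(6)[of "{..<m}"] I(3) by simp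
    have "real n * t' = real n * t + real n * dlt n m Q s" using F(1) by (simp add: algebra_simps)
    also have "\<dots> = (\<Sum>j<m. 1 - s' j)" using I(4) F(4) by (simp add: sum_subtractf)
    finally have nt: "real n * t' = (\<Sum>j<m. 1 - s' j)" .
    have p0: "\<forall>i j. 0 \<le> p' i j" using F(5) I(2) order_trans by blast
    have "card (avail m s') < card (avail m s)"
      using F(3) psubset_card_mono finite_subset[OF avail_sub] by blast
    then have "card (avail m s') \<le> m - Suc r" using c by linarith
    then show ?thesis using tsp st F(2) p' nt p0 by (simp add: run_Suc Inv_def)
  qed
qed

lemma run_step_mono:
  assumes ord: "\<forall>i<n. is_order m (Q i)" and n: "0 < n"
  shows "snd (snd (ps_run n m Q r)) i j \<le> snd (snd (ps_run n m Q (Suc r))) i j"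
proof -
  obtain t s p where tsp: "ps_run n m Q r = (t,s,p)" by (cases "ps_run n m Q r") auto
  show ?thesis
  proof (cases "avail m s = {}")
    case True
    then show ?thesis using tsp by (simp add: run_Suc step_empty)
  next
    case False
    obtain t' s' p' where st: "ps_step n m Q (t,s,p) = (t',s',p')" by (cases "ps_step n m Q (t,s,p)") auto
    have I: "\<forall>j. 0 \<le> s j" using run_inv[OF ord n, of r] tsp by (simp add: Inv_def)
    show ?thesis using step_facts(5)[OF ord n False I st] tsp st by (simp add: run_Suc)
  qed
qed

lemma run_mono:
  assumes ord: "\<forall>i<n. is_order m (Q i)" and n: "0 < n" and le: "r \<le> r'"
  shows "snd (snd (ps_run n m Q r)) i j \<le> snd (snd (ps_run n m Q r')) i j"
  using le
proof (induction r' rule: dec_induct)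
  case base then show ?case by simp
next
  case (step q) then show ?case using run_step_mono[OF ord n, of q i j] by linarith
qed

lemma run_exhausted:
  assumes ord: "\<forall>i<n. is_order m (Q i)" and n: "0 < n"
  shows "avail m (fst (snd (ps_run n m Q m))) = {}"
  using run_inv[OF ord n, of m] finite_subset[OF avail_sub] by auto

lemma truthful_util:
  assumes ord: "\<forall>i<n. is_order m (Q i)" and n: "0 < n" and jB: "j \<in> set (take k (Q 0))"
  shows "(\<forall>r'<r. 0 < fst (snd (ps_run n m Q r')) j) \<Longrightarrow>
     (\<Sum>x\<in>set (take k (Q 0)). snd (snd (ps_run n m Q r)) 0 x) = fst (ps_run n m Q r)"
proof (induction r)
  case 0
  then show ?case by (simp add: ps_run_def ps_init_def)
next
  case (Suc r)
  obtain t s p where tsp: "ps_run n m Q r = (t,s,p)" by (cases "ps_run n m Q r") auto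
  have IH: "(\<Sum>x\<in>set (take k (Q 0)). p 0 x) = t" using Suc tsp by simp
  have "j \<in> set (Q 0)" using jB in_set_takeD by fast
  then have "j < m" using ord n by (auto simp: is_order_def)
  moreover have "0 < s j" using Suc.prems tsp by (metis fst_conv lessI snd_conv)
  ultimately have ja: "j \<in> avail m s" by (simp add: avail_def)
  then have False': "avail m s \<noteq> {}" by blast
  obtain t' s' p' where st: "ps_step n m Q (t,s,p) = (t',s',p')" by (cases "ps_step n m Q (t,s,p)") auto
  have I: "\<forall>j. 0 \<le> s j" using run_inv[OF ord n, of r] tsp by (simp add: Inv_def)
  note F = step_facts[OF ord n False' I st]
  have "top_item (Q 0) (avail m s) \<in> set (take k (Q 0))"
    by (rule top_take) (use ja jB in blast)
  then have "(\<Sum>x\<in>set (take k (Q 0)). p' 0 x) = t'" using F(1) F(6) IH by simp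
  then show ?case using tsp st by (simp add: run_Suc)
qed

lemma final_le_one:
  assumes ord: "\<forall>i<n. is_order m (Q i)" and n: "0 < n" and mn: "m \<le> n"
  shows "fst (ps_run n m Q m) \<le> 1"
proof -
  obtain t s p where tsp: "ps_run n m Q m = (t,s,p)" by (cases "ps_run n m Q m") auto
  have I: "\<forall>j. 0 \<le> s j" "real n * t = (\<Sum>j<m. 1 - s j)"
    using run_inv[OF ord n, of m] tsp by (auto simp: Inv_def)
  have "(\<Sum>j<m. 1 - s j) \<le> (\<Sum>j<m. (1::real))" using I(1) by (intro sum_mono) auto
  then have "real n * t \<le> real n" using I(2) mn by simp
  then show ?thesis using tsp n by simp
qed

theorem theorem3:
  fixes n m k :: nat and P :: "nat \<Rightarrow> nat list" and L' :: "nat list"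
  assumes "m \<le> n" and "1 \<le> k" and "k \<le> m"
    and "\<forall>i<n. is_order m (P i)"
    and "is_order m L'"
    and "2/3 \<le> Max ((exhaust_time n m P) ` set (take k (P 0)))"
    and "Max ((exhaust_time n m P) ` set (take k (P 0))) \<le> 1"
  shows "utility (set (take k (P 0))) (ps_alloc n m (P(0 := L')) 0)
           \<le> 3/2 * utility (set (take k (P 0))) (ps_alloc n m P 0)"
proof -
  let ?O = "set (take k (P 0))"
  let ?Q = "P(0 := L')"
  have n: "0 < n" using assms(1-3) by linarith
  have ord: "\<forall>i<n. is_order m (P i)" by (rule assms(4))
  have ord': "\<forall>i<n. is_order m (?Q i)" using assms(4,5) by simp
  have P0: "set (P 0) = {0..<m}" using ord n by (simp add: is_order_def)
  have Osub: "?O \<subseteq> {..<m}" using P0 set_take_subset[of k "P 0"] by auto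
  have finO: "finite ?O" by simp
  have "length (P 0) = m" using ord n distinct_card[of "P 0"] by (simp add: is_order_def)
  then have "take k (P 0) \<noteq> []" using assms(2,3) by (cases "P 0") auto
  then have One: "?O \<noteq> {}" by simp
  obtain t' s' p' where tsp': "ps_run n m ?Q m = (t',s',p')" by (cases "ps_run n m ?Q m") auto
  have "Inv n m (t',s',p')" using run_inv[OF ord' n, of m] tsp' by metis
  then have I': "\<forall>i j. 0 \<le> p' i j" "(\<Sum>j<m. p' 0 j) = t'"
    unfolding Inv_def by simp_all
  have "utility ?O (ps_alloc n m ?Q 0) = (\<Sum>j\<in>?O. p' 0 j)"
    using tsp' by (simp add: utility_def ps_alloc_def)
  also have "\<dots> \<le> (\<Sum>j<m. p' 0 j)" using Osub I'(1) by (intro sum_mono2) auto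
  also have "\<dots> \<le> 1" using I'(2) final_le_one[OF ord' n assms(1)] tsp' by (metis fst_conv)
  finally have u': "utility ?O (ps_alloc n m ?Q 0) \<le> 1" .
  obtain js where js: "js \<in> ?O" "exhaust_time n m P js = Max ((exhaust_time n m P) ` ?O)"
    using Max_in[of "(exhaust_time n m P) ` ?O"] finO One by fastforce
  let ?R = "LEAST r. fst (snd (ps_run n m P r)) js \<le> 0"
  have "js < m" using js(1) Osub by auto
  then have ex: "fst (snd (ps_run n m P m)) js \<le> 0"
    using run_exhausted[OF ord n] by (auto simp: avail_def)
  then have Rle: "?R \<le> m" by (rule Least_le)
  have pos: "\<forall>r'<?R. 0 < fst (snd (ps_run n m P r')) js"
    using not_less_Least by fastforce
  have "(\<Sum>x\<in>?O. snd (snd (ps_run n m P ?R)) 0 x) = fst (ps_run n m P ?R)"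
    by (rule truthful_util[OF ord n js(1) pos])
  also have "\<dots> = exhaust_time n m P js" by (simp add: exhaust_time_def)
  finally have uR: "(\<Sum>x\<in>?O. snd (snd (ps_run n m P ?R)) 0 x) \<ge> 2/3"
    using js(2) assms(6) by simp
  have "(\<Sum>x\<in>?O. snd (snd (ps_run n m P ?R)) 0 x) \<le> (\<Sum>x\<in>?O. snd (snd (ps_run n m P m)) 0 x)"
    by (intro sum_mono run_mono[OF ord n Rle])
  then have "utility ?O (ps_alloc n m P 0) \<ge> 2/3"
    using uR by (simp add: utility_def ps_alloc_def)
  then show ?thesis using u' by linarith
qed

end
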